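(* Let $r\ge 2$ and $m$ be integers with $1\le m$ and $2m\le r$, and let $M_m\subseteq\mathbb{P}^r$ be the variety defined in the context. Then $M_m$ contains the osculating variety $T^{m-1}c_r$ of the Veronese curve but does not contain $T^{m}c_r$. In particular, $\dim(M_m)\ge m$.
   Context: $\mathfrak{sl}_2(\mathbb{C})$ has basis $X=\begin{pmatrix}0&1\\0&0\end{pmatrix}$, $H=\mathrm{diag}(1,-1)$, $Y=\begin{pmatrix}0&0\\1&0\end{pmatrix}$ acting on the irreducible module $S^r(\mathbb{C}^2)$ of binary forms of degree $r$. Let $x_0$ be a highest weight vector and $x_i=Y^ix_0/i!$ ($0\le i\le r$); identify $\mathbb{P}S^r(\mathbb{C}^2)=\mathbb{P}^r$ via coordinates $(a_0:\dots:a_r)\leftrightarrow[\sum a_ix_i]$. As $\mathfrak{sl}_2$-modules $S^2(S^r(\mathbb{C}^2))\cong\bigoplus_{m'\ge0,\,4m'\le 2r}S^{2r-4m'}(\mathbb{C}^2)$; let $f_m:S^2(S^r(\mathbb{C}^2))\to S^{2r-4m}(\mathbb{C}^2)$ be the projection onto the summand $S^{2r-4m}(\mathbb{C}^2)$ and $M_m=\{[x]: f_m(xx)=0\}$. The Veronese curve $c_r\subseteq\mathbb{P}^r$ is the closure of the image of $t\mapsto c_r(t)=(1:t:t^2:\dots:t^r)$, and for $p\ge 0$ its $p$-osculating variety $T^pc_r$ is the Zariski closure of the image of $(t,\lambda_1,\dots,\lambda_p)\mapsto c_r(t)+\lambda_1c_r'(t)+\dots+\lambda_pc_r^{(p)}(t)$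 (derivatives in $t$ of the vector $(1,t,\dots,t^r)$); $T^0c_r=c_r$. *)

theory Defs
  imports "HOL-Analysis.Analysis"
begin

text \<open>A vector of S^r(C^2) is represented by its coordinate function a :: nat => complex
  w.r.t. the basis x_0,...,x_r (x_i = Y^i x_0 / i!), with a i = 0 for i > r.
  Points of P^r are represented by nonzero such vectors (all sets below are cones, i.e.
  unions of lines through the origin minus 0; containment of cones = containment of
  projective sets).\<close>

definition PV :: "nat \<Rightarrow> (nat \<Rightarrow> complex) set" where
  "PV r = {a. (\<forall>i>r. a i = 0) \<and> (\<exists>i\<le>r. a i \<noteq> 0)}"

text \<open>Y x_i = (i+1) x_(i+1) (and Y x_r = 0), H x_i = (r - 2i) x_i,
  X x_i = (r - i + 1) x_(i-1) (and X x_0 = 0).\<close>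

definition Yop :: "nat \<Rightarrow> (nat \<Rightarrow> complex) \<Rightarrow> (nat \<Rightarrow> complex)" where
  "Yop r a = (\<lambda>i. if 1 \<le> i \<and> i \<le> r then of_nat i * a (i - 1) else 0)"

definition Xop :: "nat \<Rightarrow> (nat \<Rightarrow> complex) \<Rightarrow> (nat \<Rightarrow> complex)" where
  "Xop r a = (\<lambda>i. if i < r then of_nat (r - i) * a (i + 1) else 0)"

definition Hop :: "nat \<Rightarrow> (nat \<Rightarrow> complex) \<Rightarrow> (nat \<Rightarrow> complex)" where
  "Hop r a = (\<lambda>i. if i \<le> r then (of_int (int r - 2 * int i)) * a i else 0)"

text \<open>Tensors in V (x) V as coefficient functions T i j (coefficient of x_i (x) x_j);
  an operator acts on V (x) V as A (x) 1 + 1 (x) A.\<close>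

definition tens_op ::
  "((nat \<Rightarrow> complex) \<Rightarrow> (nat \<Rightarrow> complex)) \<Rightarrow> (nat \<Rightarrow> nat \<Rightarrow> complex) \<Rightarrow> (nat \<Rightarrow> nat \<Rightarrow> complex)" where
  "tens_op A T = (\<lambda>i j. A (\<lambda>i'. T i' j) i + A (\<lambda>j'. T i j') j)"

text \<open>S^2(V) realised as the symmetric tensors in V (x) V; the square x x of x is x (x) x.\<close>

definition sym2 :: "nat \<Rightarrow> (nat \<Rightarrow> nat \<Rightarrow> complex) set" where
  "sym2 r = {T. (\<forall>i j. T i j = T j i) \<and> (\<forall>i j. r < i \<or> r < j \<longrightarrow> T i j = 0)}"

definition sq :: "(nat \<Rightarrow> complex) \<Rightarrow> (nat \<Rightarrow> nat \<Rightarrow> complex)" where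
  "sq a = (\<lambda>i j. a i * a j)"

definition tspan :: "(nat \<Rightarrow> nat \<Rightarrow> complex) set \<Rightarrow> (nat \<Rightarrow> nat \<Rightarrow> complex) set" where
  "tspan S = {v. \<exists>F c. finite F \<and> F \<subseteq> S \<and> v = (\<lambda>i j. \<Sum>T\<in>F. c T * T i j)}"

definition hwv :: "nat \<Rightarrow> complex \<Rightarrow> (nat \<Rightarrow> nat \<Rightarrow> complex) set" where
  "hwv r w = {T \<in> sym2 r. tens_op (Xop r) T = (\<lambda>i j. 0) \<and> tens_op (Hop r) T = (\<lambda>i j. w * T i j)}"

text \<open>The summand of S^2(V) isomorphic to S^(2r-4k)(C^2): the submodule generated by the
  highest weight vectors of weight 2r - 4k.\<close>

definition summand :: "nat \<Rightarrow> nat \<Rightarrow> (nat \<Rightarrow> nat \<Rightarrow> complex) set" where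
  "summand r k = tspan {(tens_op (Yop r) ^^ j) T | j T. T \<in> hwv r (of_int (2 * int r - 4 * int k))}"

text \<open>f_m(x x) = 0 iff x x lies in the kernel of the projection onto the summand
  S^(2r-4m), i.e. in the sum of the other summands S^(2r-4k), k \<noteq> m, 4k \<le> 2r.\<close>

definition Mvar :: "nat \<Rightarrow> nat \<Rightarrow> (nat \<Rightarrow> complex) set" where
  "Mvar r m = {a \<in> PV r. sq a \<in> tspan (\<Union>k \<in> {k. 4 * k \<le> 2 * r \<and> k \<noteq> m}. summand r k)}"

definition monoms :: "nat \<Rightarrow> nat \<Rightarrow> (nat \<Rightarrow> nat) set" where
  "monoms r d = {\<alpha>. (\<forall>i>r. \<alpha> i = 0) \<and> (\<Sum>i\<le>r. \<alpha> i) = d}"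

definition hpoly :: "nat \<Rightarrow> nat \<Rightarrow> ((nat \<Rightarrow> nat) \<Rightarrow> complex) \<Rightarrow> (nat \<Rightarrow> complex) \<Rightarrow> complex" where
  "hpoly r d c a = (\<Sum>\<alpha>\<in>monoms r d. c \<alpha> * (\<Prod>i\<le>r. a i ^ \<alpha> i))"

definition zclosed :: "nat \<Rightarrow> (nat \<Rightarrow> complex) set \<Rightarrow> bool" where
  "zclosed r Z \<longleftrightarrow> (\<exists>F. Z = {a \<in> PV r. \<forall>(d, c) \<in> F. hpoly r d c a = 0})"

definition zclosure :: "nat \<Rightarrow> (nat \<Rightarrow> complex) set \<Rightarrow> (nat \<Rightarrow> complex) set" where
  "zclosure r S = \<Inter>{Z. zclosed r Z \<and> S \<inter> PV r \<subseteq> Z}"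

definition zirreducible :: "nat \<Rightarrow> (nat \<Rightarrow> complex) set \<Rightarrow> bool" where
  "zirreducible r Z \<longleftrightarrow> zclosed r Z \<and> Z \<noteq> {} \<and>
     (\<forall>A B. zclosed r A \<and> zclosed r B \<and> Z \<subseteq> A \<union> B \<longrightarrow> Z \<subseteq> A \<or> Z \<subseteq> B)"

definition zdim :: "nat \<Rightarrow> (nat \<Rightarrow> complex) set \<Rightarrow> enat" where
  "zdim r S = Sup {enat n | n. \<exists>Z. (\<forall>i\<le>n. zirreducible r (Z i)) \<and>
                                  (\<forall>i<n. Z i \<subset> Z (Suc i)) \<and> Z n \<subseteq> S}"

definition vcurve :: "nat \<Rightarrow> complex \<Rightarrow> (nat \<Rightarrow> complex)" where
  "vcurve r t = (\<lambda>i. if i \<le> r then t ^ i else 0)"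

definition vcurve_der :: "nat \<Rightarrow> nat \<Rightarrow> complex \<Rightarrow> (nat \<Rightarrow> complex)" where
  "vcurve_der r q t = (\<lambda>i. if i \<le> r then (deriv ^^ q) (\<lambda>s. s ^ i) t else 0)"

definition osc_image :: "nat \<Rightarrow> nat \<Rightarrow> (nat \<Rightarrow> complex) set" where
  "osc_image r p = {v. \<exists>t (lam::nat \<Rightarrow> complex).
      v = (\<lambda>i. vcurve r t i + (\<Sum>q\<in>{1..p}. lam q * vcurve_der r q t i))}"

definition osc :: "nat \<Rightarrow> nat \<Rightarrow> (nat \<Rightarrow> complex) set" where
  "osc r p = zclosure r (osc_image r p)"

end

theory Submission imports Defs "HOL-Library.Function_Algebras" begin

section \<open>Falling factorial and derivatives\<close>

definition fallf :: "nat \<Rightarrow> nat \<Rightarrow> nat" where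
  "fallf i q = (\<Prod>l<q. i - l)"

lemma fallf_0[simp]: "fallf i 0 = 1" by (simp add: fallf_def)
lemma fallf_Suc: "fallf i (Suc q) = fallf i q * (i - q)"
  by (simp add: fallf_def)
lemma fallf_zero: "i < q \<Longrightarrow> fallf i q = 0"
proof -
  assume "i < q" then have "i \<in> {..<q}" by simp
  then show ?thesis unfolding fallf_def by (metis (no_types) prod_zero finite_lessThan diff_self_eq_0)
qed
lemma fallf_self: "fallf i i = fact i"
  by (simp add: fallf_def fact_prod_rev atLeast0LessThan)

lemma deriv_cpow: "deriv (\<lambda>s. c * s ^ n) = (\<lambda>x::complex. c * of_nat n * x ^ (n - 1))"
proof
  fix x :: complex
  have "((\<lambda>s. c * s ^ n) has_field_derivative c * (of_nat n * x ^ (n - 1))) (at x)"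
    by (auto intro!: derivative_eq_intros)
  then have "deriv (\<lambda>s. c * s ^ n) x = c * (of_nat n * x ^ (n - 1))"
    by (rule DERIV_imp_deriv)
  then show "deriv (\<lambda>s. c * s ^ n) x = c * of_nat n * x ^ (n - 1)"
    by (simp add: mult.assoc)
qed

lemma deriv_iter_pow: "(deriv ^^ q) (\<lambda>s. s ^ i) = (\<lambda>s::complex. of_nat (fallf i q) * s ^ (i - q))"
proof (induct q)
  case 0 then show ?case by (simp only: funpow_0 fallf_0 of_nat_1 mult_1 diff_zero)
next
  case (Suc q)
  have "(deriv ^^ Suc q) (\<lambda>s. s ^ i) = deriv ((deriv ^^ q) (\<lambda>s::complex. s ^ i))"
    by (simp only: funpow.simps comp_def)
  also have "\<dots> = deriv (\<lambda>s::complex. of_nat (fallf i q) * s ^ (i - q))"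
    by (simp only: Suc)
  also have "\<dots> = (\<lambda>s. of_nat (fallf i q) * of_nat (i - q) * s ^ (i - q - 1))"
    by (rule deriv_cpow)
  also have "\<dots> = (\<lambda>s. of_nat (fallf i (Suc q)) * s ^ (i - Suc q))"
    by (simp add: fallf_Suc)
  finally show ?case .
qed

lemma vcurve_der_eq: "vcurve_der r q t = (\<lambda>i. if i \<le> r then of_nat (fallf i q) * t ^ (i - q) else 0)"
  unfolding vcurve_der_def deriv_iter_pow by simp

definition img :: "nat \<Rightarrow> nat \<Rightarrow> complex \<Rightarrow> (nat \<Rightarrow> complex) \<Rightarrow> (nat \<Rightarrow> complex)" where
  "img r p t lam = (\<lambda>i. vcurve r t i + (\<Sum>q\<in>{1..p}. lam q * vcurve_der r q t i))"

lemma osc_image_img: "osc_image r p = {img r p t lam | t lam. True}"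
  unfolding osc_image_def img_def by blast

lemma img_eq: "img r p t lam = (\<lambda>i. if i \<le> r then t ^ i + (\<Sum>q\<in>{1..p}. lam q * of_nat (fallf i q) * t ^ (i - q)) else 0)"
  unfolding img_def vcurve_def vcurve_der_eq
  by (rule ext) (simp add: mult.assoc)

lemma img_PV: "img r p t lam \<in> PV r"
proof -
  have "img r p t lam 0 = 1"
    by (simp add: img_eq fallf_zero)
  then show ?thesis unfolding PV_def by (auto simp: img_eq intro!: exI[of _ 0])
qed


section \<open>Tensor vector space\<close>

definition tsc :: "complex \<Rightarrow> (nat\<Rightarrow>nat\<Rightarrow>complex) \<Rightarrow> (nat\<Rightarrow>nat\<Rightarrow>complex)" where
  "tsc c T = (\<lambda>i j. c * T i j)"

interpretation T: vector_space tsc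
  by unfold_locales (auto simp: tsc_def fun_eq_iff algebra_simps)

interpretation TP: vector_space_pair tsc "(*) :: complex \<Rightarrow> complex \<Rightarrow> complex"
  by unfold_locales (auto simp: tsc_def fun_eq_iff algebra_simps)

interpretation TT: vector_space_pair tsc tsc
  by unfold_locales

lemma sum_app: "(sum f A) i = sum (\<lambda>x. f x i) A"
  by (induct A rule: infinite_finite_induct) auto

lemma tspan_eq: "tspan S = T.span S"
  unfolding tspan_def T.span_explicit
  by (auto simp: fun_eq_iff sum_app tsc_def)

abbreviation tY :: "nat \<Rightarrow> (nat\<Rightarrow>nat\<Rightarrow>complex) \<Rightarrow> (nat\<Rightarrow>nat\<Rightarrow>complex)" where
  "tY r \<equiv> tens_op (Yop r)"

lemma tY_apply: "tY r U i j = (if 1 \<le> i \<and> i \<le> r then of_nat i * U (i - 1) j else 0)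
   + (if 1 \<le> j \<and> j \<le> r then of_nat j * U i (j - 1) else 0)"
  by (simp add: tens_op_def Yop_def)

lemma linear_tY: "Vector_Spaces.linear tsc tsc (tY r)"
  unfolding Vector_Spaces.linear_iff
  by (auto simp: tY_apply fun_eq_iff tsc_def algebra_simps T.vector_space_axioms)

definition wsupp :: "nat \<Rightarrow> (nat\<Rightarrow>nat\<Rightarrow>complex) \<Rightarrow> bool" where
  "wsupp s U \<longleftrightarrow> (\<forall>i j. i + j \<noteq> s \<longrightarrow> U i j = 0)"

definition phi :: "nat \<Rightarrow> (nat\<Rightarrow>nat\<Rightarrow>complex) \<Rightarrow> complex" where
  "phi s U = (\<Sum>i\<le>s. (-1)^i * of_nat (s choose i) * U i (s - i))"

lemma linear_phi: "Vector_Spaces.linear tsc (*) (phi s)"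
  unfolding Vector_Spaces.linear_iff
  by (auto simp: phi_def tsc_def algebra_simps sum.distrib sum_distrib_left
      T.vector_space_axioms vector_space_over_itself.vector_space_axioms)

lemma choose_rel: "i \<le> n \<Longrightarrow> (of_nat (Suc n choose Suc i) :: complex) * of_nat (Suc i)
     = of_nat (Suc n choose i) * of_nat (Suc n - i)"
proof -
  assume "i \<le> n"
  have "Suc i * (Suc (i + (n - i)) choose Suc i) = Suc (n - i) * (Suc (i + (n - i)) choose i)"
    by (rule Suc_times_binomial_add[of i "n - i"])
  with \<open>i \<le> n\<close> have "Suc i * (Suc n choose Suc i) = (Suc n - i) * (Suc n choose i)"
    by (simp add: Suc_diff_le)
  then have "(of_nat (Suc i * (Suc n choose Suc i)) :: complex) = of_nat ((Suc n - i) * (Suc n choose i))"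
    by simp
  then show ?thesis by (simp only: of_nat_mult mult.commute)
qed

lemma phi_tY: assumes "s \<le> r" shows "phi s (tY r U) = 0"
proof (cases s)
  case 0 then show ?thesis by (simp add: phi_def tY_apply)
next
  case (Suc n)
  define a where "a i = (-1)^i * of_nat (s choose i) * (if 1 \<le> i then of_nat i * U (i - 1) (s - i) else 0)" for i
  define b where "b i = (-1)^i * of_nat (s choose i) * (if 1 \<le> s - i then of_nat (s - i) * U i (s - i - 1) else (0::complex))" for i
  have "phi s (tY r U) = (\<Sum>i\<le>s. a i + b i)"
    unfolding phi_def a_def b_def using assms
    by (intro sum.cong) (auto simp: tY_apply algebra_simps)
  also have "\<dots> = (\<Sum>i\<le>s. a i) + (\<Sum>i\<le>s. b i)" by (rule sum.distrib)
  also have "(\<Sum>i\<le>s. a i) = (\<Sum>i\<le>n. a (Suc i))"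
    unfolding Suc by (subst sum.atMost_Suc_shift) (simp add: a_def)
  also have "(\<Sum>i\<le>s. b i) = (\<Sum>i\<le>n. b i)"
  proof -
    have "b s = 0" by (simp add: b_def)
    then show ?thesis unfolding Suc by simp
  qed
  also have "(\<Sum>i\<le>n. a (Suc i)) + (\<Sum>i\<le>n. b i) = (\<Sum>i\<le>n. a (Suc i) + b i)"
    by (simp add: sum.distrib)
  also have "\<dots> = 0"
  proof (rule sum.neutral, rule ballI)
    fix i assume "i \<in> {..n}"
    then have i: "i \<le> n" by simp
    have e: "s - Suc i = s - i - 1" by simp
    have "a (Suc i) = - ((-1)^i * (of_nat (Suc n choose Suc i) * of_nat (Suc i)) * U i (s - i - 1))"
      unfolding a_def Suc by (simp add: algebra_simps)
    also have "\<dots> = - ((-1)^i * (of_nat (Suc n choose i) * of_nat (Suc n - i)) * U i (s - i - 1))"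
      by (simp only: choose_rel[OF i])
    also have "\<dots> = - b i"
      unfolding b_def Suc using i by (simp add: algebra_simps Suc_diff_le)
    finally show "a (Suc i) + b i = 0" by simp
  qed
  finally show ?thesis .
qed


lemma tY_wsupp: "wsupp s U \<Longrightarrow> wsupp (Suc s) (tY r U)"
  unfolding wsupp_def tY_apply by auto

lemma Ypow_wsupp: "wsupp s U \<Longrightarrow> wsupp (s + j) ((tY r ^^ j) U)"
  by (induct j) (auto intro: tY_wsupp)

lemma phi_wsupp: "wsupp s U \<Longrightarrow> s \<noteq> t \<Longrightarrow> phi t U = 0"
  unfolding wsupp_def phi_def by (intro sum.neutral) auto

definition wk :: "nat \<Rightarrow> nat \<Rightarrow> complex" where
  "wk r k = of_int (2 * int r - 4 * int k)"

lemma hwv_wsupp: assumes "T \<in> hwv r (wk r k)" shows "wsupp (2 * k) T"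
  unfolding wsupp_def
proof (intro allI impI)
  fix i j assume ij: "i + j \<noteq> 2 * k"
  show "T i j = 0"
  proof (cases "r < i \<or> r < j")
    case True then show ?thesis using assms by (auto simp: hwv_def sym2_def)
  next
    case False
    have "tens_op (Hop r) T i j = wk r k * T i j"
      using assms by (auto simp: hwv_def wk_def)
    then have "(of_int (int r - 2 * int i) + of_int (int r - 2 * int j)) * T i j = wk r k * T i j"
      using False by (simp add: tens_op_def Hop_def algebra_simps)
    then have "(of_int (int r - 2 * int i + (int r - 2 * int j) - (2 * int r - 4 * int k)) :: complex) * T i j = 0"
      by (simp add: wk_def algebra_simps)
    moreover have "int r - 2 * int i + (int r - 2 * int j) - (2 * int r - 4 * int k) \<noteq> 0"
      using ij by linarith
    ultimately show ?thesis by (simp del: of_int_diff of_int_add of_int_mult)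
  qed
qed

definition HH :: "nat \<Rightarrow> nat \<Rightarrow> (nat\<Rightarrow>nat\<Rightarrow>complex) set" where
  "HH r m = {(tY r ^^ j) T | j T k. 4 * k \<le> 2 * r \<and> k \<noteq> m \<and> T \<in> hwv r (wk r k)}"

lemma span_Union_span: "T.span (\<Union>k\<in>A. T.span (B k)) = T.span (\<Union>k\<in>A. B k)"
proof
  show "T.span (\<Union>k\<in>A. T.span (B k)) \<subseteq> T.span (\<Union>k\<in>A. B k)"
    by (rule T.span_minimal) (auto intro: T.subspace_span T.span_mono[THEN subsetD, rotated])
  show "T.span (\<Union>k\<in>A. B k) \<subseteq> T.span (\<Union>k\<in>A. T.span (B k))"
    by (rule T.span_mono) (auto intro: T.span_base)
qed

lemma Mvar_span: "Mvar r m = {a \<in> PV r. sq a \<in> T.span (HH r m)}"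
proof -
  have "(\<Union>k\<in>{k. 4 * k \<le> 2 * r \<and> k \<noteq> m}. {(tY r ^^ j) T | j T. T \<in> hwv r (of_int (2 * int r - 4 * int k))})
      = HH r m"
    unfolding HH_def wk_def by blast
  then show ?thesis
    unfolding Mvar_def summand_def tspan_eq span_Union_span by simp
qed

lemma HH_tY: "x \<in> HH r m \<Longrightarrow> tY r x \<in> HH r m"
  unfolding HH_def by clarsimp (metis funpow.simps(2) comp_apply)

lemma span_HH_tY: assumes "x \<in> T.span (HH r m)" shows "tY r x \<in> T.span (HH r m)"
proof -
  have "tY r x \<in> tY r ` T.span (HH r m)" using assms by blast
  also have "\<dots> = T.span (tY r ` HH r m)"
    by (rule TT.linear_span_image[OF linear_tY, symmetric])
  also have "\<dots> \<subseteq> T.span (HH r m)"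
    by (rule T.span_mono) (auto intro: HH_tY)
  finally show ?thesis .
qed

lemma phi_HH: assumes "2 * m \<le> r" "x \<in> HH r m" shows "phi (2 * m) x = 0"
proof -
  obtain j T k where x: "x = (tY r ^^ j) T" and k: "k \<noteq> m" and T: "T \<in> hwv r (wk r k)"
    using assms(2) unfolding HH_def by blast
  have w: "wsupp (2 * k + j) x" unfolding x by (rule Ypow_wsupp[OF hwv_wsupp[OF T]])
  show ?thesis
  proof (cases "2 * k + j = 2 * m")
    case False then show ?thesis by (rule phi_wsupp[OF w])
  next
    case True
    with k obtain j' where j: "j = Suc j'" by (cases j) auto
    have "x = tY r ((tY r ^^ j') T)" unfolding x j by simp
    then show ?thesis using assms(1) by (simp add: phi_tY)
  qed
qed

lemma phi_span_HH: assumes "2 * m \<le> r" "x \<in> T.span (HH r m)" shows "phi (2 * m) x = 0"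
  by (rule TP.linear_eq_0_on_span[OF linear_phi _ assms(2)]) (rule phi_HH[OF assms(1)])

lemma zclosure_sub: "S \<inter> PV r \<subseteq> zclosure r S"
  unfolding zclosure_def by blast

lemma part2: assumes "1 \<le> m" "2 * m \<le> r" shows "\<not> osc r m \<subseteq> Mvar r m"
proof
  assume sub: "osc r m \<subseteq> Mvar r m"
  define lam :: "nat \<Rightarrow> complex" where "lam q = (if q = m then 1 / fact m else 0)" for q
  define a where "a = img r m 0 lam"
  have a_eq: "a = (\<lambda>i. if i = 0 \<or> i = m then 1 else 0)"
  proof
    fix i
    have "(\<Sum>q\<in>{1..m}. lam q * of_nat (fallf i q) * 0 ^ (i - q)) = 
       (\<Sum>q\<in>{1..m}. if q = m then 1 / fact m * of_nat (fallf i m) * 0 ^ (i - m) else 0)"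
      by (rule sum.cong) (auto simp: lam_def)
    also have "\<dots> = 1 / fact m * of_nat (fallf i m) * 0 ^ (i - m)"
      using assms(1) by simp
    finally have sm: "(\<Sum>q\<in>{1..m}. lam q * of_nat (fallf i q) * 0 ^ (i - q)) = 1 / fact m * of_nat (fallf i m) * 0 ^ (i - m)" .
    show "a i = (if i = 0 \<or> i = m then 1 else 0)"
    proof (cases "i \<le> r")
      case False then show ?thesis using assms unfolding a_def img_eq by auto
    next
      case True
      then have "a i = 0 ^ i + 1 / fact m * of_nat (fallf i m) * 0 ^ (i - m)"
        unfolding a_def img_eq sm by simp
      also have "\<dots> = (if i = 0 \<or> i = m then 1 else 0)"
      proof (cases "i < m")
        case True then show ?thesis using assms(1) by (auto simp: fallf_self fallf_zero)
      next
        case False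
        show ?thesis
        proof (cases "i = m")
          case True then show ?thesis using assms(1) by (auto simp: fallf_self)
        next
          case False
          with \<open>\<not> i < m\<close> have "0 < i - m" "0 < i" by auto
          then have z: "(0::complex) ^ (i - m) = 0" "(0::complex) ^ i = 0" by auto
          show ?thesis using False \<open>0 < i\<close> unfolding z by simp
        qed
      qed
      finally show ?thesis .
    qed
  qed
  have "a \<in> osc r m"
    unfolding osc_def using zclosure_sub[of "osc_image r m" r] img_PV[of r m 0 lam]
    unfolding osc_image_img a_def by blast
  with sub have "sq a \<in> T.span (HH r m)" by (auto simp: Mvar_span)
  then have "phi (2 * m) (sq a) = 0" using phi_span_HH assms by blast
  moreover have "phi (2 * m) (sq a) = (-1)^m * of_nat (2 * m choose m)"
  proof -
    have "phi (2 * m) (sq a) = (\<Sum>i\<le>2 * m. if i = m then (-1)^m * of_nat (2 * m choose m) else 0)"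
      unfolding phi_def sq_def a_eq using assms(1)
      by (intro sum.cong) auto
    also have "\<dots> = (-1)^m * of_nat (2 * m choose m)" by simp
    finally show ?thesis .
  qed
  moreover have "(2 * m choose m) \<noteq> 0" by simp
  ultimately show False by simp
qed


section \<open>Highest weight vectors and low weights\<close>

definition Tk :: "nat \<Rightarrow> nat \<Rightarrow> (nat\<Rightarrow>nat\<Rightarrow>complex)" where
  "Tk r k = (\<lambda>i j. if i + j = 2 * k then (-1)^i * fact (r - i) * fact (r - j) else 0)"

lemma neg1_pow_eq: "even (i + j) \<Longrightarrow> ((-1::complex)^i) = (-1)^j"
  by (cases "even i") (auto simp: neg_one_even_power neg_one_odd_power)

lemma fact_step_c: "i < r \<Longrightarrow> (of_nat (r - i) * fact (r - Suc i) :: complex) = fact (r - i)"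
proof -
  assume "i < r"
  then have "r - i > 0" by simp
  then have e: "fact (r - i) = (of_nat (r - i) * fact (r - i - 1) :: complex)" by (rule fact_reduce)
  have "r - Suc i = r - i - 1" by simp
  then show ?thesis using e by simp
qed

lemma Tk_hwv: assumes "2 * k \<le> r" shows "Tk r k \<in> hwv r (wk r k)"
  unfolding hwv_def
proof (intro CollectI conjI)
  show "Tk r k \<in> sym2 r"
    unfolding sym2_def
  proof (intro CollectI conjI allI impI)
    fix i j
    show "Tk r k i j = Tk r k j i"
    proof (cases "i + j = 2 * k")
      case True
      then have "even (i + j)" by simp
      then have e: "((-1::complex)^i) = (-1)^j" by (rule neg1_pow_eq)
      have "j + i = 2 * k" using True by simp
      then show ?thesis using True unfolding Tk_def e by (simp add: algebra_simps)
    next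
      case False
      then have "j + i \<noteq> 2 * k" by simp
      then show ?thesis using False unfolding Tk_def by simp
    qed
  next
    fix i j assume "r < i \<or> r < j"
    then have "i + j \<noteq> 2 * k" using assms by auto
    then show "Tk r k i j = 0" unfolding Tk_def by simp
  qed
  show "tens_op (Xop r) (Tk r k) = (\<lambda>i j. 0)"
  proof (intro ext)
    fix i j
    show "tens_op (Xop r) (Tk r k) i j = 0"
    proof (cases "Suc (i + j) = 2 * k")
      case False then show ?thesis by (simp add: tens_op_def Xop_def Tk_def)
    next
      case True
      then have ir: "i < r" "j < r" using assms by auto
      have e1: "Suc i + j = 2 * k" "i + Suc j = 2 * k" using True by auto
      have "tens_op (Xop r) (Tk r k) i j =
          of_nat (r - i) * ((-1)^(Suc i) * fact (r - Suc i) * fact (r - j))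
        + of_nat (r - j) * ((-1)^i * fact (r - i) * fact (r - Suc j))"
        using ir e1 by (simp add: tens_op_def Xop_def Tk_def)
      also have "\<dots> = (-1)^i * (- (of_nat (r - i) * fact (r - Suc i)) * fact (r - j)
         + fact (r - i) * (of_nat (r - j) * fact (r - Suc j)))"
        by (simp add: algebra_simps)
      also have "\<dots> = 0" unfolding fact_step_c[OF ir(1)] fact_step_c[OF ir(2)] by simp
      finally show ?thesis .
    qed
  qed
  show "tens_op (Hop r) (Tk r k) = (\<lambda>i j. wk r k * Tk r k i j)"
  proof (intro ext)
    fix i j
    show "tens_op (Hop r) (Tk r k) i j = wk r k * Tk r k i j"
    proof (cases "i + j = 2 * k")
      case False then show ?thesis by (simp add: tens_op_def Hop_def Tk_def)
    next
      case True
      then have ir: "i \<le> r" "j \<le> r" using assms by auto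
      have ie: "int r - 2 * int i + (int r - 2 * int j) = 2 * int r - 4 * int k" using True by linarith
      have "tens_op (Hop r) (Tk r k) i j = of_int (int r - 2 * int i) * Tk r k i j + of_int (int r - 2 * int j) * Tk r k i j"
        using ir by (simp add: tens_op_def Hop_def)
      also have "\<dots> = of_int (int r - 2 * int i + (int r - 2 * int j)) * Tk r k i j"
        by (simp only: of_int_add distrib_right)
      also have "\<dots> = wk r k * Tk r k i j" unfolding ie wk_def ..
      finally show ?thesis .
    qed
  qed
qed

lemma Tk_wsupp: "wsupp (2 * k) (Tk r k)"
  by (simp add: wsupp_def Tk_def)

lemma Tk_HH: "2 * k \<le> r \<Longrightarrow> k \<noteq> m \<Longrightarrow> Tk r k \<in> HH r m"
proof -
  assume a: "2 * k \<le> r" "k \<noteq> m"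
  have "Tk r k = (tY r ^^ 0) (Tk r k)" by simp
  then show ?thesis unfolding HH_def using Tk_hwv[OF a(1)] a by fastforce
qed

lemma phi_Tk: assumes "2 * k \<le> r" shows "phi (2 * k) (Tk r k) \<noteq> 0"
proof -
  define N where "N = (\<Sum>i\<le>2*k. (2 * k choose i) * fact (r - i) * fact (r - (2 * k - i)) :: nat)"
  have "phi (2 * k) (Tk r k) = of_nat N"
    unfolding phi_def Tk_def N_def of_nat_sum
  proof (intro sum.cong refl)
    fix i assume "i \<in> {..2*k}"
    then have "i + (2 * k - i) = 2 * k" by simp
    moreover have "((-1::complex)^i) * (-1)^i = 1"
      by (simp add: power_add[symmetric])
    ultimately show "(-1)^i * of_nat (2 * k choose i) * (if i + (2 * k - i) = 2 * k then (-1)^i * fact (r - i) * fact (r - (2 * k - i)) else 0)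
       = (of_nat ((2 * k choose i) * fact (r - i) * fact (r - (2 * k - i))) :: complex)"
      by (simp add: of_nat_mult algebra_simps)
  qed
  moreover have "N > 0"
  proof -
    have "(2 * k choose 0) * fact (r - 0) * fact (r - (2 * k - 0)) \<le> N"
      unfolding N_def by (rule member_le_sum) auto
    moreover have "(2 * k choose 0) * fact (r - 0) * fact (r - (2 * k - 0)) > (0::nat)" by simp
    ultimately show ?thesis by linarith
  qed
  ultimately show ?thesis by simp
qed

lemma phi_odd: assumes sym: "\<And>i j. S i j = S j i" and "odd s" shows "phi s S = 0"
proof -
  have "phi s S = (\<Sum>i\<in>{0..s}. (-1)^(s + 0 - i) * of_nat (s choose (s + 0 - i)) * S (s + 0 - i) (s - (s + 0 - i)))"
    unfolding phi_def atMost_atLeast0 by (rule sum.atLeastAtMost_rev)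
  also have "\<dots> = (\<Sum>i\<in>{0..s}. - ((-1)^i * of_nat (s choose i) * S i (s - i)))"
  proof (intro sum.cong refl)
    fix i assume "i \<in> {0..s}"
    then have i: "i \<le> s" by simp
    have "((-1::complex)^(s - i)) * (-1)^i = (-1)^s" using i by (simp add: power_add[symmetric])
    also have "\<dots> = -1" using assms(2) by simp
    finally have m1: "((-1::complex)^(s - i)) * (-1)^i = -1" .
    have q: "(-1::complex)^i * (-1)^i = 1" by (simp add: power_add[symmetric])
    have "((-1::complex)^(s - i)) = (-1)^(s - i) * ((-1)^i * (-1)^i)" using q by simp
    also have "\<dots> = ((-1)^(s - i) * (-1)^i) * (-1)^i" by (simp add: mult.assoc)
    also have "\<dots> = - ((-1)^i)" unfolding m1 by simp
    finally have p: "((-1::complex)^(s - i)) = - ((-1)^i)" .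
    show "(-1)^(s + 0 - i) * of_nat (s choose (s + 0 - i)) * S (s + 0 - i) (s - (s + 0 - i)) = - ((-1)^i * of_nat (s choose i) * S i (s - i))"
      using i by (simp add: p binomial_symmetric[OF i, symmetric] sym[of "s - i" i])
  qed
  also have "\<dots> = - phi s S" unfolding phi_def atMost_atLeast0 by (simp add: sum_negf)
  finally show ?thesis by simp
qed

primrec vr :: "(nat \<Rightarrow> complex) \<Rightarrow> nat \<Rightarrow> complex" where
  "vr g 0 = g 0"
| "vr g (Suc i) = g (Suc i) - vr g i"

lemma vr_closed: "(-1)^i * vr g i = (\<Sum>l\<le>i. (-1)^l * g l)"
  by (induct i) (simp_all add: algebra_simps)

lemma sym2_sym: "S \<in> sym2 r \<Longrightarrow> S i j = S j i"
  by (simp add: sym2_def)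

lemma sym2_out: "S \<in> sym2 r \<Longrightarrow> r < i \<or> r < j \<Longrightarrow> S i j = 0"
  by (auto simp: sym2_def)

lemma divide_step:
  assumes s: "1 \<le> s" "s \<le> r" and S: "S \<in> sym2 r" "wsupp s S" "phi s S = 0"
  shows "\<exists>U. U \<in> sym2 r \<and> wsupp (s - 1) U \<and> tY r U = S"
proof -
  define g where "g l = S l (s - l) / (fact l * fact (s - l))" for l
  define U0 where "U0 = (\<lambda>i j. if i + j = s - 1 then fact i * fact j * vr g i else (0::complex))"
  define U where "U = (\<lambda>i j. (U0 i j + U0 j i) / 2)"
  obtain n where n: "s = Suc n" using s by (cases s) auto
  have gS: "S l (s - l) = fact l * fact (s - l) * g l" for l
    by (simp add: g_def)
  have "0 = phi s S" using S by simp
  also have "\<dots> = (\<Sum>l\<le>s. fact s * ((-1)^l * g l))"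
    unfolding phi_def
  proof (intro sum.cong refl)
    fix l assume "l \<in> {..s}"
    then have l: "l \<le> s" by simp
    have "(of_nat (s choose l) :: complex) * (fact l * fact (s - l)) = fact s"
      using binomial_fact[OF l, where 'a=complex] by simp
    then show "(-1)^l * of_nat (s choose l) * S l (s - l) = fact s * ((-1)^l * g l)"
      unfolding gS by (simp add: algebra_simps)
  qed
  also have "\<dots> = fact s * (\<Sum>l\<le>s. (-1)^l * g l)" by (simp add: sum_distrib_left)
  finally have "(\<Sum>l\<le>s. (-1)^l * g l) = 0" by simp
  then have "(\<Sum>l\<le>n. (-1)^l * g l) + (-1)^(Suc n) * g (Suc n) = 0" unfolding n by simp
  then have "(-1)^n * vr g n = (-1)^n * g (Suc n)" unfolding vr_closed by simp
  then have key: "vr g n = g (Suc n)" by simp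
  have tU0: "tY r U0 i j = S i j" for i j
  proof (cases "i + j = s")
    case True
    then have ij: "i \<le> r" "j \<le> r" using s by auto
    have "j = s - i" using True by simp
    then have Sij: "S i j = fact i * fact j * g i" using gS[of i] by simp
    have A: "(if 1 \<le> i \<and> i \<le> r then of_nat i * U0 (i - 1) j else 0) = (if 1 \<le> i then fact i * fact j * vr g (i - 1) else 0)"
    proof (cases "1 \<le> i")
      case True
      then have "i - 1 + j = s - 1" using \<open>i + j = s\<close> by simp
      moreover have "of_nat i * fact (i - 1) = (fact i :: complex)" using True fact_reduce[of i, where 'a=complex] by simp
      ultimately show ?thesis using True ij unfolding U0_def by (simp add: algebra_simps)
    qed simp
    have B: "(if 1 \<le> j \<and> j \<le> r then of_nat j * U0 i (j - 1) else 0) = (if 1 \<le> j then fact i * fact j * vr g i else 0)"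
    proof (cases "1 \<le> j")
      case True
      then have "i + (j - 1) = s - 1" using \<open>i + j = s\<close> by simp
      moreover have "of_nat j * fact (j - 1) = (fact j :: complex)" using True fact_reduce[of j, where 'a=complex] by simp
      ultimately show ?thesis using True ij unfolding U0_def by (simp add: algebra_simps)
    qed simp
    have "tY r U0 i j = fact i * fact j * ((if 1 \<le> i then vr g (i - 1) else 0) + (if 1 \<le> j then vr g i else 0))"
      unfolding tY_apply A B by (simp add: algebra_simps)
    also have "\<dots> = fact i * fact j * g i"
    proof (cases i)
      case 0 then show ?thesis using True s by simp
    next
      case (Suc i')
      show ?thesis
      proof (cases "j = 0")
        case True then have "i = Suc n" using \<open>i + j = s\<close> n by simp
        then show ?thesis using True key by simp
      next
        case False then show ?thesis using Suc by simp
      qed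
    qed
    finally show ?thesis using Sij by simp
  next
    case False
    have "S i j = 0" using S(2) False by (simp add: wsupp_def)
    moreover have "tY r U0 i j = 0"
      unfolding tY_apply U0_def using False s by auto
    ultimately show ?thesis by simp
  qed
  have "tY r U = S"
  proof (intro ext)
    fix i j
    have "tY r U i j = (tY r U0 i j + tY r U0 j i) / 2"
      unfolding tY_apply U_def by (simp add: algebra_simps add_divide_distrib)
    also have "\<dots> = S i j" unfolding tU0 sym2_sym[OF S(1), of j i] by simp
    finally show "tY r U i j = S i j" .
  qed
  moreover have "U \<in> sym2 r"
    unfolding sym2_def U_def U0_def using s by (auto simp: add.commute)
  moreover have "wsupp (s - 1) U"
    unfolding wsupp_def U_def U0_def by (auto simp: add.commute)
  ultimately show ?thesis by blast
qed

lemma phi_minus: "phi s (S - tsc c T) = phi s S - c * phi s T"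
  unfolding phi_def tsc_def by (simp add: sum_subtractf sum_distrib_left algebra_simps)

lemma reduce_hw:
  assumes "s \<le> r" "S \<in> sym2 r" "wsupp s S"
  shows "\<exists>c S'. S = S' + tsc c (Tk r (s div 2)) \<and> S' \<in> sym2 r \<and> wsupp s S' \<and> phi s S' = 0 \<and> (odd s \<longrightarrow> c = 0)"
proof (cases "even s")
  case True
  define k where "k = s div 2"
  have sk: "s = 2 * k" using True by (simp add: k_def)
  have kr: "2 * k \<le> r" using assms sk by simp
  define c where "c = phi s S / phi s (Tk r k)"
  define S' where "S' = S - tsc c (Tk r k)"
  have Tsym: "Tk r k \<in> sym2 r" using Tk_hwv[OF kr] by (simp add: hwv_def)
  have "S' \<in> sym2 r" using assms(2) Tsym unfolding S'_def sym2_def tsc_def by auto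
  moreover have "wsupp s S'" using assms(3) Tk_wsupp[of k r] unfolding S'_def wsupp_def tsc_def sk by auto
  moreover have "phi s S' = 0"
    unfolding S'_def phi_minus c_def using phi_Tk[OF kr] sk by simp
  moreover have "S = S' + tsc c (Tk r (s div 2))" unfolding S'_def k_def by simp
  ultimately show ?thesis using True by blast
next
  case False
  have "phi s S = 0" by (rule phi_odd[OF sym2_sym[OF assms(2)] False])
  moreover have "S = S + tsc 0 (Tk r (s div 2))" by (simp add: tsc_def fun_eq_iff)
  ultimately show ?thesis using assms by blast
qed

lemma low_weight:
  assumes m: "2 * m \<le> r"
  shows "s < 2 * m \<Longrightarrow> S \<in> sym2 r \<Longrightarrow> wsupp s S \<Longrightarrow> S \<in> T.span (HH r m)"
proof (induct s arbitrary: S)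
  case 0
  obtain c S' where d: "S = S' + tsc c (Tk r 0)" "S' \<in> sym2 r" "wsupp 0 S'" "phi 0 S' = 0"
    using reduce_hw[of 0 r S] 0 by auto
  have "S' = 0"
  proof (intro ext)
    fix i j show "S' i j = 0 i j"
      using d(3,4) by (cases "i + j = 0") (auto simp: wsupp_def phi_def)
  qed
  moreover have "Tk r 0 \<in> T.span (HH r m)"
    by (rule T.span_base, rule Tk_HH) (use 0 in auto)
  ultimately show ?case using d(1) by (simp add: T.span_scale)
next
  case (Suc n)
  have sr: "Suc n \<le> r" using Suc m by simp
  obtain c S' where d: "S = S' + tsc c (Tk r (Suc n div 2))" "S' \<in> sym2 r" "wsupp (Suc n) S'"
      "phi (Suc n) S' = 0" "odd (Suc n) \<longrightarrow> c = 0"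
    using reduce_hw[OF sr Suc(3,4)] by blast
  obtain U where U: "U \<in> sym2 r" "wsupp n U" "tY r U = S'"
    using divide_step[OF _ sr d(2,3,4)] by auto
  have "U \<in> T.span (HH r m)" using Suc U by simp
  then have S': "S' \<in> T.span (HH r m)" using span_HH_tY U(3) by metis
  have "tsc c (Tk r (Suc n div 2)) \<in> T.span (HH r m)"
  proof (cases "even (Suc n)")
    case True
    have "Tk r (Suc n div 2) \<in> HH r m"
      by (rule Tk_HH) (use True Suc(2) sr in auto)
    then show ?thesis by (intro T.span_scale T.span_base)
  next
    case False then have "c = 0" using d(5) by simp
    then show ?thesis by (simp add: T.span_zero)
  qed
  then show ?case unfolding d(1) by (rule T.span_add[OF S'])
qed

section \<open>Translation along the curve\<close>

lemma fallf_Suc2: "0 < i \<Longrightarrow> fallf i (Suc n) = i * fallf (i - 1) n"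
proof -
  assume "0 < i"
  have "fallf i (Suc n) = (i - 0) * (\<Prod>l<n. i - Suc l)"
    unfolding fallf_def by (rule prod.lessThan_Suc_shift)
  also have "(\<Prod>l<n. i - Suc l) = fallf (i - 1) n"
    unfolding fallf_def by (intro prod.cong refl) simp
  finally show ?thesis by simp
qed

lemma fallf_fact: "n \<le> i \<Longrightarrow> fallf i n * fact (i - n) = (fact i :: nat)"
proof (induct n)
  case 0 then show ?case by simp
next
  case (Suc n)
  then have e: "i - n = Suc (i - Suc n)" by simp
  have "fallf i (Suc n) * fact (i - Suc n) = fallf i n * ((i - n) * fact (i - Suc n))"
    by (simp add: fallf_Suc)
  also have "(i - n) * fact (i - Suc n) = (fact (i - n) :: nat)"
    unfolding e by simp
  finally show ?case using Suc by simp
qed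

lemma Ypow_vec: assumes "\<forall>i>r. b i = 0"
  shows "(Yop r ^^ n) b i = (if n \<le> i \<and> i \<le> r then of_nat (fallf i n) * b (i - n) else 0)"
proof (induct n arbitrary: i)
  case 0 then show ?case using assms by auto
next
  case (Suc n)
  have "(Yop r ^^ Suc n) b i = Yop r ((Yop r ^^ n) b) i" by simp
  also have "\<dots> = (if 1 \<le> i \<and> i \<le> r then of_nat i * (Yop r ^^ n) b (i - 1) else 0)"
    by (simp add: Yop_def)
  also have "\<dots> = (if Suc n \<le> i \<and> i \<le> r then of_nat (fallf i (Suc n)) * b (i - Suc n) else 0)"
  proof (cases "Suc n \<le> i \<and> i \<le> r")
    case True
    then have "1 \<le> i \<and> i \<le> r" "n \<le> i - 1 \<and> i - 1 \<le> r" "i - 1 - n = i - Suc n" by auto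
    moreover have "fallf i (Suc n) = i * fallf (i - 1) n" using True by (intro fallf_Suc2) simp
    ultimately show ?thesis using True unfolding Suc by simp
  next
    case False
    then have "\<not> (1 \<le> i \<and> i \<le> r) \<or> \<not> (n \<le> i - 1 \<and> i - 1 \<le> r)" by auto
    then show ?thesis using False unfolding Suc by auto
  qed
  finally show ?case .
qed

lemma pascal_sum:
  fixes f :: "nat \<Rightarrow> nat \<Rightarrow> complex"
  shows "(\<Sum>l\<le>n. of_nat (n choose l) * (f (Suc l) (n - l) + f l (Suc n - l)))
       = (\<Sum>l\<le>Suc n. of_nat (Suc n choose l) * f l (Suc n - l))"
proof -
  have A: "(\<Sum>l\<le>Suc n. of_nat (Suc n choose l) * f l (Suc n - l))
      = f 0 (Suc n) + (\<Sum>l\<le>n. of_nat (n choose l) * f (Suc l) (n - l)) + (\<Sum>l\<le>n. of_nat (n choose Suc l) * f (Suc l) (n - l))"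
    by (subst sum.atMost_Suc_shift) (simp add: sum.distrib algebra_simps)
  have B: "(\<Sum>l\<le>n. of_nat (n choose l) * f l (Suc n - l)) = f 0 (Suc n) + (\<Sum>l\<le>n. of_nat (n choose Suc l) * f (Suc l) (n - l))"
  proof -
    have "(\<Sum>l\<le>Suc n. of_nat (n choose l) * f l (Suc n - l)) = (\<Sum>l\<le>n. of_nat (n choose l) * f l (Suc n - l))"
      by simp
    moreover have "(\<Sum>l\<le>Suc n. of_nat (n choose l) * f l (Suc n - l)) = f 0 (Suc n) + (\<Sum>l\<le>n. of_nat (n choose Suc l) * f (Suc l) (n - l))"
      by (subst sum.atMost_Suc_shift) simp
    ultimately show ?thesis by (simp add: binomial_eq_0)
  qed
  show ?thesis unfolding A using B by (simp add: sum.distrib algebra_simps)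
qed

lemma Yop_Suc: "(Yop r ^^ Suc l) u i = (if 1 \<le> i \<and> i \<le> r then of_nat i * (Yop r ^^ l) u (i - 1) else 0)"
  by (simp add: Yop_def)

lemma leibniz: "(tY r ^^ n) (\<lambda>i j. u i * v j) i j
   = (\<Sum>l\<le>n. of_nat (n choose l) * ((Yop r ^^ l) u i * (Yop r ^^ (n - l)) v j))"
proof (induct n arbitrary: i j)
  case 0 then show ?case by simp
next
  case (Suc n)
  let ?f = "\<lambda>l l'. (Yop r ^^ l) u i * (Yop r ^^ l') v j"
  have "(tY r ^^ Suc n) (\<lambda>i j. u i * v j) i j = tY r ((tY r ^^ n) (\<lambda>i j. u i * v j)) i j" by simp
  also have "\<dots> = (\<Sum>l\<le>n. of_nat (n choose l) * ?f (Suc l) (n - l)) + (\<Sum>l\<le>n. of_nat (n choose l) * ?f l (Suc n - l))"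
  proof -
    have e1: "(if 1 \<le> i \<and> i \<le> r then of_nat i * (tY r ^^ n) (\<lambda>i j. u i * v j) (i - 1) j else 0)
       = (\<Sum>l\<le>n. of_nat (n choose l) * ?f (Suc l) (n - l))"
    proof (cases "1 \<le> i \<and> i \<le> r")
      case True
      have "(if 1 \<le> i \<and> i \<le> r then of_nat i * (tY r ^^ n) (\<lambda>i j. u i * v j) (i - 1) j else 0)
         = of_nat i * (\<Sum>l\<le>n. of_nat (n choose l) * ((Yop r ^^ l) u (i - 1) * (Yop r ^^ (n - l)) v j))"
        using True Suc by presburger
      also have "\<dots> = (\<Sum>l\<le>n. of_nat (n choose l) * ((of_nat i * (Yop r ^^ l) u (i - 1)) * (Yop r ^^ (n - l)) v j))"
        by (simp add: sum_distrib_left algebra_simps)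
      also have "\<dots> = (\<Sum>l\<le>n. of_nat (n choose l) * ?f (Suc l) (n - l))"
        using True by (simp only: Yop_Suc if_True simp_thms)
      finally show ?thesis .
    next
      case False
      then show ?thesis by (simp only: Yop_Suc if_False mult_zero_left mult_zero_right sum.neutral_const)
    qed
    have e2: "(if 1 \<le> j \<and> j \<le> r then of_nat j * (tY r ^^ n) (\<lambda>i j. u i * v j) i (j - 1) else 0)
       = (\<Sum>l\<le>n. of_nat (n choose l) * ?f l (Suc n - l))"
    proof -
      have "(if 1 \<le> j \<and> j \<le> r then of_nat j * (tY r ^^ n) (\<lambda>i j. u i * v j) i (j - 1) else 0)
       = (\<Sum>l\<le>n. of_nat (n choose l) * ?f l (Suc (n - l)))"
      proof (cases "1 \<le> j \<and> j \<le> r")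
        case True
        have "(if 1 \<le> j \<and> j \<le> r then of_nat j * (tY r ^^ n) (\<lambda>i j. u i * v j) i (j - 1) else 0)
           = of_nat j * (\<Sum>l\<le>n. of_nat (n choose l) * ((Yop r ^^ l) u i * (Yop r ^^ (n - l)) v (j - 1)))"
          using True Suc by presburger
        also have "\<dots> = (\<Sum>l\<le>n. of_nat (n choose l) * ((Yop r ^^ l) u i * (of_nat j * (Yop r ^^ (n - l)) v (j - 1))))"
          by (simp add: sum_distrib_left algebra_simps)
        also have "\<dots> = (\<Sum>l\<le>n. of_nat (n choose l) * ?f l (Suc (n - l)))"
          using True by (simp only: Yop_Suc if_True simp_thms)
        finally show ?thesis .
      next
        case False
        then show ?thesis by (simp only: Yop_Suc if_False mult_zero_left mult_zero_right sum.neutral_const)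
      qed
      also have "\<dots> = (\<Sum>l\<le>n. of_nat (n choose l) * ?f l (Suc n - l))"
        by (intro sum.cong refl) (simp add: Suc_diff_le)
      finally show ?thesis .
    qed
    show ?thesis unfolding tY_apply e1 e2 ..
  qed
  also have "\<dots> = (\<Sum>l\<le>n. of_nat (n choose l) * (?f (Suc l) (n - l) + ?f l (Suc n - l)))"
    by (simp add: sum.distrib[symmetric] algebra_simps)
  also have "\<dots> = (\<Sum>l\<le>Suc n. of_nat (Suc n choose l) * ?f l (Suc n - l))"
    by (rule pascal_sum)
  finally show ?case .
qed


lemma fallf_ratio: assumes "q \<le> i"
  shows "(of_nat (fallf i (i - q)) :: complex) / fact (i - q) = of_nat (fallf i q) / fact q"
proof -
  have "fallf i (i - q) * fact q = (fact i :: nat)"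
    using fallf_fact[of "i - q" i] assms by simp
  moreover have "fallf i q * fact (i - q) = (fact i :: nat)" using fallf_fact[OF assms] .
  ultimately have "fallf i (i - q) * fact q = fallf i q * (fact (i - q) :: nat)" by simp
  then have "(of_nat (fallf i (i - q)) :: complex) * fact q = of_nat (fallf i q) * fact (i - q)"
    by (metis (mono_tags) of_nat_fact of_nat_mult)
  then show ?thesis by (simp add: field_simps)
qed

lemma img_expand:
  fixes lam :: "nat \<Rightarrow> complex" and t :: complex
  assumes p: "p \<le> r"
  defines "b \<equiv> (\<lambda>q. if q = 0 then 1 else if q \<le> p then lam q * fact q else (0::complex))"
  shows "img r p t lam i = (\<Sum>n\<le>r. t^n / fact n * (Yop r ^^ n) b i)"
proof -
  have bs: "\<forall>i>r. b i = 0" using p by (auto simp: b_def)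
  note Yv = Ypow_vec[OF bs]
  show ?thesis
  proof (cases "i \<le> r")
    case False then show ?thesis by (simp add: img_eq Yv)
  next
    case True
    define g where "g q = t^(i - q) * of_nat (fallf i q) / fact q * b q" for q
    have "(\<Sum>n\<le>r. t^n / fact n * (Yop r ^^ n) b i) = (\<Sum>n\<le>r. if n \<le> i then t^n / fact n * (of_nat (fallf i n) * b (i - n)) else 0)"
      by (intro sum.cong refl) (simp add: Yv True)
    also have "\<dots> = (\<Sum>n\<in>{n\<in>{..r}. n \<le> i}. t^n / fact n * (of_nat (fallf i n) * b (i - n)))"
      by (simp only: sum.inter_filter[OF finite_atMost])
    also have "{n\<in>{..r}. n \<le> i} = {0..i}" using True by auto
    also have "(\<Sum>n\<in>{0..i}. t^n / fact n * (of_nat (fallf i n) * b (i - n)))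
       = (\<Sum>q\<in>{0..i}. t^(i + 0 - q) / fact (i + 0 - q) * (of_nat (fallf i (i + 0 - q)) * b (i - (i + 0 - q))))"
      by (rule sum.atLeastAtMost_rev)
    also have "\<dots> = (\<Sum>q\<in>{0..i}. g q)"
    proof (intro sum.cong refl)
      fix q assume "q \<in> {0..i}"
      then have q: "q \<le> i" by simp
      have "t^(i + 0 - q) / fact (i + 0 - q) * (of_nat (fallf i (i + 0 - q)) * b (i - (i + 0 - q)))
          = t^(i - q) * (of_nat (fallf i (i - q)) / fact (i - q)) * b q"
        using q by simp
      also have "\<dots> = g q" unfolding fallf_ratio[OF q] g_def by simp
      finally show "t^(i + 0 - q) / fact (i + 0 - q) * (of_nat (fallf i (i + 0 - q)) * b (i - (i + 0 - q))) = g q" .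
    qed
    also have "\<dots> = (\<Sum>q\<in>{0..r}. g q)"
      by (rule sum.mono_neutral_left) (use True in \<open>auto simp: g_def fallf_zero\<close>)
    also have "\<dots> = g 0 + (\<Sum>q\<in>{1..r}. g q)"
      by (simp add: sum.atLeast_Suc_atMost)
    also have "g 0 = t ^ i" by (simp add: g_def b_def)
    also have "(\<Sum>q\<in>{1..r}. g q) = (\<Sum>q\<in>{1..r}. if q \<le> p then lam q * of_nat (fallf i q) * t ^ (i - q) else 0)"
      by (intro sum.cong refl) (auto simp: g_def b_def)
    also have "\<dots> = (\<Sum>q\<in>{q\<in>{1..r}. q \<le> p}. lam q * of_nat (fallf i q) * t ^ (i - q))"
      by (simp only: sum.inter_filter[OF finite_atLeastAtMost])
    also have "{q\<in>{1..r}. q \<le> p} = {1..p}" using p by auto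
    finally show ?thesis using True by (simp add: img_eq)
  qed
qed


lemma sum_app2: "(sum f A) i j = sum (\<lambda>x. f x i j) A"
  by (simp add: sum_app)

lemma sqb_span:
  assumes m: "1 \<le> m" "2 * m \<le> r" and b: "\<forall>i\<ge>m. b i = 0"
  shows "sq b \<in> T.span (HH r m)"
proof -
  define P where "P s = (\<lambda>i j. if i + j = s then b i * b j else 0)" for s
  have "sq b = (\<Sum>s<2*m-1. P s)"
  proof (intro ext)
    fix i j
    have "(\<Sum>s<2*m-1. P s) i j = (\<Sum>s<2*m-1. if i + j = s then b i * b j else 0)"
      unfolding sum_app2 P_def ..
    also have "\<dots> = (if i + j < 2*m-1 then b i * b j else 0)"
      by (simp add: sum.delta)
    also have "\<dots> = b i * b j"
    proof (cases "i + j < 2*m-1")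
      case False
      then have "i \<ge> m \<or> j \<ge> m" by auto
      then show ?thesis using False b by auto
    qed simp
    finally show "sq b i j = (\<Sum>s<2*m-1. P s) i j" by (simp add: sq_def)
  qed
  also have "\<dots> \<in> T.span (HH r m)"
  proof (rule T.span_sum)
    fix s assume "s \<in> {..<2*m-1}"
    then have s: "s < 2 * m" by simp
    show "P s \<in> T.span (HH r m)"
    proof (rule low_weight[OF m(2) s])
      show "P s \<in> sym2 r"
        unfolding sym2_def P_def using b m by (auto simp: add.commute mult.commute)
      show "wsupp s (P s)" unfolding wsupp_def P_def by simp
    qed
  qed
  finally show ?thesis .
qed

lemma Ypow_span: "x \<in> T.span (HH r m) \<Longrightarrow> (tY r ^^ n) x \<in> T.span (HH r m)"
  by (induct n) (auto intro: span_HH_tY)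

lemma c_mult: assumes "l \<le> n"
  shows "(t::complex)^l / fact l * (t^(n - l) / fact (n - l)) = t^n / fact n * of_nat (n choose l)"
proof -
  have "t^l * t^(n - l) = t^n" using assms by (simp add: power_add[symmetric])
  moreover have "(of_nat (n choose l) :: complex) = fact n / (fact l * fact (n - l))"
    by (rule binomial_fact[OF assms])
  ultimately show ?thesis by (simp add: field_simps)
qed

lemma sq_img_span:
  fixes lam :: "nat \<Rightarrow> complex" and t :: complex
  assumes m: "1 \<le> m" "2 * m \<le> r"
  shows "sq (img r (m - 1) t lam) \<in> T.span (HH r m)"
proof -
  define b where "b = (\<lambda>q. if q = 0 then 1 else if q \<le> m - 1 then lam q * fact q else (0::complex))"
  define a where "a = img r (m - 1) t lam"
  define Yb where "Yb n = (Yop r ^^ n) b" for n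
  define c where "c n = t^n / fact n" for n
  have bs: "\<forall>i>r. b i = 0" using m by (auto simp: b_def)
  have bm: "\<forall>i\<ge>m. b i = 0" using m by (auto simp: b_def)
  have Yb0: "n > r \<Longrightarrow> Yb n i = 0" for n i unfolding Yb_def Ypow_vec[OF bs] by auto
  have ai: "a i = (\<Sum>n\<le>r. c n * Yb n i)" for i
    unfolding a_def c_def Yb_def b_def using m by (intro img_expand) simp
  have "sq a = (\<Sum>n\<le>2*r. tsc (c n) ((tY r ^^ n) (sq b)))"
  proof (intro ext)
    fix i j
    define F where "F l l' = (c l * Yb l i) * (c l' * Yb l' j)" for l l'
    have "sq a i j = (\<Sum>l\<le>r. c l * Yb l i) * (\<Sum>l'\<le>r. c l' * Yb l' j)"
      by (simp add: sq_def ai)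
    also have "\<dots> = (\<Sum>(l,l')\<in>{..r}\<times>{..r}. F l l')"
      unfolding sum_product F_def sum.cartesian_product ..
    also have "\<dots> = (\<Sum>(l,l')\<in>{(l,l'). l + l' \<le> 2*r}. F l l')"
    proof (rule sum.mono_neutral_left)
      show "finite {(l,l'). l + l' \<le> 2*r}"
        by (rule finite_subset[of _ "{..2*r}\<times>{..2*r}"]) auto
      show "{..r}\<times>{..r} \<subseteq> {(l,l'). l + l' \<le> 2*r}" by auto
      show "\<forall>x\<in>{(l,l'). l + l' \<le> 2*r} - {..r}\<times>{..r}. (case x of (l, l') \<Rightarrow> F l l') = 0"
        by (auto simp: F_def) (meson Yb0 not_le)+
    qed
    also have "\<dots> = (\<Sum>n\<le>2*r. \<Sum>l\<le>n. F l (n - l))"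
      by (rule sum.triangle_reindex_eq)
    also have "\<dots> = (\<Sum>n\<le>2*r. c n * (\<Sum>l\<le>n. of_nat (n choose l) * (Yb l i * Yb (n - l) j)))"
    proof (intro sum.cong refl)
      fix n
      show "(\<Sum>l\<le>n. F l (n - l)) = c n * (\<Sum>l\<le>n. of_nat (n choose l) * (Yb l i * Yb (n - l) j))"
        unfolding sum_distrib_left
      proof (intro sum.cong refl)
        fix l assume "l \<in> {..n}"
        then have l: "l \<le> n" by simp
        have "F l (n - l) = (c l * c (n - l)) * (Yb l i * Yb (n - l) j)"
          by (simp add: F_def algebra_simps)
        also have "c l * c (n - l) = c n * of_nat (n choose l)"
          unfolding c_def by (rule c_mult[OF l])
        finally show "F l (n - l) = c n * (of_nat (n choose l) * (Yb l i * Yb (n - l) j))"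
          by (simp add: algebra_simps)
      qed
    qed
    also have "\<dots> = (\<Sum>n\<le>2*r. tsc (c n) ((tY r ^^ n) (sq b))) i j"
      unfolding sum_app2 tsc_def sq_def leibniz Yb_def ..
    finally show "sq a i j = (\<Sum>n\<le>2*r. tsc (c n) ((tY r ^^ n) (sq b))) i j" .
  qed
  also have "\<dots> \<in> T.span (HH r m)"
    by (intro T.span_sum T.span_scale Ypow_span sqb_span[OF m bm])
  finally show ?thesis unfolding a_def .
qed


section \<open>Zariski closed sets\<close>

lemma PV_closed: "zclosed r (PV r)"
  unfolding zclosed_def by (rule exI[of _ "{}"]) auto

lemma zclosure_least: "zclosed r Z \<Longrightarrow> S \<inter> PV r \<subseteq> Z \<Longrightarrow> zclosure r S \<subseteq> Z"
  unfolding zclosure_def by blast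

lemma zclosure_PV: "zclosure r S \<subseteq> PV r"
  by (rule zclosure_least[OF PV_closed]) auto

lemma zclosure_mono: "S \<subseteq> S' \<Longrightarrow> zclosure r S \<subseteq> zclosure r S'"
  unfolding zclosure_def by blast

lemma zclosure_closed: "zclosed r (zclosure r S)"
proof -
  define Zs where "Zs = {Z. zclosed r Z \<and> S \<inter> PV r \<subseteq> Z}"
  have "\<forall>Z\<in>Zs. \<exists>F. Z = {a \<in> PV r. \<forall>(d, c) \<in> F. hpoly r d c a = 0}"
  proof
    fix Z assume "Z \<in> Zs"
    then have "zclosed r Z" by (simp add: Zs_def)
    then show "\<exists>F. Z = {a \<in> PV r. \<forall>(d, c) \<in> F. hpoly r d c a = 0}" by (simp only: zclosed_def)
  qed
  from bchoice[OF this] obtain FF where FF0: "\<forall>Z\<in>Zs. Z = {a \<in> PV r. \<forall>(d, c) \<in> FF Z. hpoly r d c a = 0}"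
    ..
  have FF: "\<And>Z. Z \<in> Zs \<Longrightarrow> Z = {a \<in> PV r. \<forall>(d, c) \<in> FF Z. hpoly r d c a = 0}"
    by (rule bspec[OF FF0])
  have PVZ: "PV r \<in> Zs" unfolding Zs_def mem_Collect_eq using PV_closed by (intro conjI) auto
  have zc: "zclosure r S = \<Inter>Zs" unfolding zclosure_def Zs_def ..
  have mem: "a \<in> Z \<longleftrightarrow> a \<in> PV r \<and> (\<forall>p \<in> FF Z. hpoly r (fst p) (snd p) a = 0)" if "Z \<in> Zs" for a Z
  proof -
    have "a \<in> Z \<longleftrightarrow> a \<in> {a \<in> PV r. \<forall>(d, c) \<in> FF Z. hpoly r d c a = 0}"
      using FF[OF that] by (rule arg_cong)
    also have "\<dots> \<longleftrightarrow> a \<in> PV r \<and> (\<forall>p \<in> FF Z. hpoly r (fst p) (snd p) a = 0)"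
      by (simp add: case_prod_beta)
    finally show ?thesis .
  qed
  have "zclosure r S = {a \<in> PV r. \<forall>(d, c) \<in> (\<Union>Z\<in>Zs. FF Z). hpoly r d c a = 0}"
  proof (rule set_eqI)
    fix a
    have "a \<in> \<Inter>Zs \<longleftrightarrow> (\<forall>Z\<in>Zs. a \<in> Z)" by blast
    also have "\<dots> \<longleftrightarrow> a \<in> PV r \<and> (\<forall>Z\<in>Zs. \<forall>p \<in> FF Z. hpoly r (fst p) (snd p) a = 0)"
    proof
      assume h: "\<forall>Z\<in>Zs. a \<in> Z"
      show "a \<in> PV r \<and> (\<forall>Z\<in>Zs. \<forall>p \<in> FF Z. hpoly r (fst p) (snd p) a = 0)"
      proof (intro conjI ballI)
        show "a \<in> PV r" using h PVZ by (rule bspec)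
        fix Z p assume "Z \<in> Zs" "p \<in> FF Z"
        then show "hpoly r (fst p) (snd p) a = 0" using mem[OF \<open>Z \<in> Zs\<close>, of a] h by simp
      qed
    next
      assume h: "a \<in> PV r \<and> (\<forall>Z\<in>Zs. \<forall>p \<in> FF Z. hpoly r (fst p) (snd p) a = 0)"
      show "\<forall>Z\<in>Zs. a \<in> Z"
      proof
        fix Z assume "Z \<in> Zs"
        then show "a \<in> Z" using mem[OF \<open>Z \<in> Zs\<close>, of a] h by simp
      qed
    qed
    also have "\<dots> \<longleftrightarrow> a \<in> {a \<in> PV r. \<forall>(d, c) \<in> (\<Union>Z\<in>Zs. FF Z). hpoly r d c a = 0}"
      by (simp add: case_prod_beta)
    finally show "a \<in> zclosure r S \<longleftrightarrow> a \<in> {a \<in> PV r. \<forall>(d, c) \<in> (\<Union>Z\<in>Zs. FF Z). hpoly r d c a = 0}"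
      unfolding zc .
  qed
  then show ?thesis unfolding zclosed_def by (rule exI)
qed

definition Eij :: "nat \<Rightarrow> nat \<Rightarrow> (nat\<Rightarrow>nat\<Rightarrow>complex)" where
  "Eij i j = (\<lambda>i' j'. if i' = i \<and> j' = j then 1 else 0)"

definition mon :: "nat \<Rightarrow> nat \<Rightarrow> (nat \<Rightarrow> nat)" where
  "mon i j = (\<lambda>l. (if l = i then 1 else 0) + (if l = j then 1 else 0))"

definition cpoly :: "nat \<Rightarrow> ((nat\<Rightarrow>nat\<Rightarrow>complex) \<Rightarrow> complex) \<Rightarrow> (nat \<Rightarrow> nat) \<Rightarrow> complex" where
  "cpoly r \<psi> \<alpha> = (\<Sum>x\<in>{x. x \<in> {..r}\<times>{..r} \<and> mon (fst x) (snd x) = \<alpha>}. \<psi> (Eij (fst x) (snd x)))"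

lemma sq_expand: assumes "a \<in> PV r"
  shows "sq a = (\<Sum>x\<in>{..r}\<times>{..r}. tsc (a (fst x) * a (snd x)) (Eij (fst x) (snd x)))"
proof (intro ext)
  fix i j
  have z: "\<forall>i>r. a i = 0" using assms by (simp add: PV_def)
  have "(\<Sum>x\<in>{..r}\<times>{..r}. tsc (a (fst x) * a (snd x)) (Eij (fst x) (snd x))) i j
      = (\<Sum>x\<in>{..r}\<times>{..r}. if x = (i, j) then a i * a j else 0)"
    unfolding sum_app2 tsc_def Eij_def by (intro sum.cong refl) auto
  also have "\<dots> = (if (i, j) \<in> {..r}\<times>{..r} then a i * a j else 0)"
    by (subst sum.delta) auto
  also have "\<dots> = sq a i j" using z by (auto simp: sq_def)
  finally show "sq a i j = (\<Sum>x\<in>{..r}\<times>{..r}. tsc (a (fst x) * a (snd x)) (Eij (fst x) (snd x))) i j" by simp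
qed

lemma monoms_finite: "finite (monoms r d)"
proof -
  have "monoms r d \<subseteq> (\<lambda>f i. if i \<le> r then f i else 0) ` (PiE {..r} (\<lambda>_. {..d}))"
  proof
    fix \<alpha> assume a: "\<alpha> \<in> monoms r d"
    then have z: "\<forall>i>r. \<alpha> i = 0" and s: "(\<Sum>i\<le>r. \<alpha> i) = d" by (auto simp: monoms_def)
    have "\<alpha> i \<le> d" if "i \<le> r" for i
      using member_le_sum[of i "{..r}" \<alpha>] that s by simp
    then have "restrict \<alpha> {..r} \<in> PiE {..r} (\<lambda>_. {..d})" by auto
    moreover have "\<alpha> = (\<lambda>i. if i \<le> r then restrict \<alpha> {..r} i else 0)"
      using z by (auto simp: fun_eq_iff)
    ultimately show "\<alpha> \<in> (\<lambda>f i. if i \<le> r then f i else 0) ` (PiE {..r} (\<lambda>_. {..d}))" by blast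
  qed
  moreover have "finite (PiE {..r} (\<lambda>_. {..d::nat}))" by (rule finite_PiE) auto
  ultimately show ?thesis by (meson finite_imageI finite_subset)
qed

lemma mon_in: "i \<le> r \<Longrightarrow> j \<le> r \<Longrightarrow> mon i j \<in> monoms r 2"
  unfolding monoms_def mon_def by (simp add: sum.distrib)

lemma prod_mon: assumes "i \<le> r" "j \<le> r" shows "(\<Prod>l\<le>r. a l ^ mon i j l) = a i * a j"
proof -
  have "(\<Prod>l\<le>r. a l ^ mon i j l) = (\<Prod>l\<le>r. (if l = i then a l else 1) * (if l = j then a l else 1))"
    unfolding mon_def power_add by (intro prod.cong refl) auto
  also have "\<dots> = a i * a j" using assms by (simp add: prod.distrib)
  finally show ?thesis .
qed

lemma hpoly_cpoly:
  assumes lin: "Vector_Spaces.linear tsc (*) \<psi>" and a: "a \<in> PV r"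
  shows "hpoly r 2 (cpoly r \<psi>) a = \<psi> (sq a)"
proof -
  let ?S = "{..r}\<times>{..r}"
  let ?g = "\<lambda>x. mon (fst x) (snd x)"
  let ?h = "\<lambda>x. \<psi> (Eij (fst x) (snd x)) * (a (fst x) * a (snd x))"
  have "hpoly r 2 (cpoly r \<psi>) a = (\<Sum>\<alpha>\<in>monoms r 2. \<Sum>x\<in>{x. x \<in> ?S \<and> ?g x = \<alpha>}. ?h x)"
    unfolding hpoly_def cpoly_def sum_distrib_right
  proof (intro sum.cong refl)
    fix \<alpha> x assume "x \<in> {x. x \<in> ?S \<and> ?g x = \<alpha>}"
    then show "\<psi> (Eij (fst x) (snd x)) * (\<Prod>i\<le>r. a i ^ \<alpha> i) = ?h x"
      using prod_mon[of "fst x" r "snd x" a] by auto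
  qed
  also have "\<dots> = (\<Sum>x\<in>?S. ?h x)"
    by (rule sum.group) (auto simp: monoms_finite mon_in)
  also have "\<dots> = \<psi> (sq a)"
    unfolding sq_expand[OF a] TP.linear_sum[OF lin] TP.linear_scale[OF lin]
    by (simp add: mult.commute)
  finally show ?thesis .
qed

lemma separate:
  assumes "v \<notin> T.span G"
  shows "\<exists>\<psi>. Vector_Spaces.linear tsc (*) \<psi> \<and> (\<forall>x\<in>G. \<psi> x = 0) \<and> \<psi> v = 1"
proof -
  obtain B where B: "B \<subseteq> G" "T.independent B" "G \<subseteq> T.span B"
    by (rule T.maximal_independent_subset)
  have "T.span B \<subseteq> T.span G" using B(1) by (rule T.span_mono)
  then have vB: "v \<notin> T.span B" using assms by blast
  have ind: "T.independent (insert v B)" by (rule T.independent_insertI[OF vB B(2)])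
  obtain g where g: "Vector_Spaces.linear tsc (*) g" "\<forall>x\<in>insert v B. g x = (if x = v then 1 else 0)"
    using TP.linear_independent_extend[OF ind, of "\<lambda>x. if x = v then 1 else 0"] by blast
  have "\<forall>x\<in>B. g x = 0" using g(2) vB T.span_base by fastforce
  then have "\<forall>x\<in>G. g x = 0"
    using TP.linear_eq_0_on_span[OF g(1)] B(3) by blast
  moreover have "g v = 1" using g(2) by simp
  ultimately show ?thesis using g(1) by blast
qed

lemma span_closed: "zclosed r {a \<in> PV r. sq a \<in> T.span G}"
proof -
  define F where "F = {(2::nat, cpoly r \<psi>) | \<psi>. Vector_Spaces.linear tsc (*) \<psi> \<and> (\<forall>x\<in>G. \<psi> x = 0)}"
  have "{a \<in> PV r. sq a \<in> T.span G} = {a \<in> PV r. \<forall>(d, c) \<in> F. hpoly r d c a = 0}"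
  proof (intro Collect_cong conj_cong refl)
    fix a assume a: "a \<in> PV r"
    show "sq a \<in> T.span G \<longleftrightarrow> (\<forall>(d, c) \<in> F. hpoly r d c a = 0)"
    proof
      assume sa: "sq a \<in> T.span G"
      show "\<forall>(d, c) \<in> F. hpoly r d c a = 0"
      proof (clarify)
        fix d c assume "(d, c) \<in> F"
        then obtain \<psi> where p: "d = 2" "c = cpoly r \<psi>" "Vector_Spaces.linear tsc (*) \<psi>" "\<forall>x\<in>G. \<psi> x = 0"
          unfolding F_def by blast
        have "\<psi> (sq a) = 0" using TP.linear_eq_0_on_span[OF p(3)] p(4) sa by blast
        then show "hpoly r d c a = 0" unfolding p(1,2) hpoly_cpoly[OF p(3) a] .
      qed
    next
      assume h: "\<forall>(d, c) \<in> F. hpoly r d c a = 0"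
      show "sq a \<in> T.span G"
      proof (rule ccontr)
        assume "sq a \<notin> T.span G"
        then obtain \<psi> where p: "Vector_Spaces.linear tsc (*) \<psi>" "\<forall>x\<in>G. \<psi> x = 0" "\<psi> (sq a) = 1"
          using separate by blast
        then have "(2, cpoly r \<psi>) \<in> F" unfolding F_def by blast
        then have "hpoly r 2 (cpoly r \<psi>) a = 0" using h by blast
        then show False unfolding hpoly_cpoly[OF p(1) a] p(3) by simp
      qed
    qed
  qed
  then show ?thesis unfolding zclosed_def by blast
qed

lemma part1: assumes "1 \<le> m" "2 * m \<le> r" shows "osc r (m - 1) \<subseteq> Mvar r m"
  unfolding osc_def
proof (rule zclosure_least)
  show "zclosed r (Mvar r m)" unfolding Mvar_span by (rule span_closed)
  show "osc_image r (m - 1) \<inter> PV r \<subseteq> Mvar r m"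
    unfolding osc_image_img Mvar_span using sq_img_span[OF assms] img_PV by blast
qed


section \<open>Irreducibility\<close>

definition pf :: "(complex \<Rightarrow> complex) \<Rightarrow> bool" where
  "pf f \<longleftrightarrow> (\<exists>P. \<forall>s. f s = poly P s)"

lemma pf_const: "pf (\<lambda>s. c)"
  unfolding pf_def by (rule exI[of _ "[:c:]"]) simp

lemma pf_id: "pf (\<lambda>s. s)"
  unfolding pf_def by (rule exI[of _ "[:0, 1:]"]) simp

lemma pf_add: "pf f \<Longrightarrow> pf g \<Longrightarrow> pf (\<lambda>s. f s + g s)"
  unfolding pf_def by (metis poly_add)

lemma pf_mult: "pf f \<Longrightarrow> pf g \<Longrightarrow> pf (\<lambda>s. f s * g s)"
  unfolding pf_def by (metis poly_mult)

lemma pf_sum: "(\<And>x. x \<in> A \<Longrightarrow> pf (f x)) \<Longrightarrow> pf (\<lambda>s. \<Sum>x\<in>A. f x s)"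
proof (induct A rule: infinite_finite_induct)
  case (infinite A) then show ?case by (simp add: pf_const)
next
  case empty then show ?case by (simp add: pf_const)
next
  case (insert x F) then show ?case by (simp add: pf_add)
qed

lemma pf_prod: "(\<And>x. x \<in> A \<Longrightarrow> pf (f x)) \<Longrightarrow> pf (\<lambda>s. \<Prod>x\<in>A. f x s)"
proof (induct A rule: infinite_finite_induct)
  case (infinite A) then show ?case by (simp add: pf_const)
next
  case empty then show ?case by (simp add: pf_const)
next
  case (insert x F) then show ?case by (simp add: pf_mult)
qed

lemma pf_pow: "pf f \<Longrightarrow> pf (\<lambda>s. f s ^ n)"
  by (induct n) (simp_all add: pf_const pf_mult)

lemma pf_hpoly: "(\<And>i. pf (\<lambda>s. \<gamma> s i)) \<Longrightarrow> pf (\<lambda>s. hpoly r d c (\<gamma> s))"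
  unfolding hpoly_def by (intro pf_sum pf_mult pf_const pf_prod pf_pow) auto

lemma irred_closure:
  assumes SPV: "S \<subseteq> PV r" and ne: "S \<noteq> {}"
    and path: "\<And>u v. u \<in> S \<Longrightarrow> v \<in> S \<Longrightarrow> \<exists>\<gamma>. \<gamma> 0 = u \<and> \<gamma> 1 = v \<and> (\<forall>s. \<gamma> s \<in> S) \<and> (\<forall>i. pf (\<lambda>s. \<gamma> s i))"
  shows "zirreducible r (zclosure r S)"
  unfolding zirreducible_def
proof (intro conjI allI impI)
  show "zclosed r (zclosure r S)" by (rule zclosure_closed)
  have SZ: "S \<subseteq> zclosure r S" using zclosure_sub[of S r] SPV by blast
  then show "zclosure r S \<noteq> {}" using ne by blast
  fix A B assume AB: "zclosed r A \<and> zclosed r B \<and> zclosure r S \<subseteq> A \<union> B"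
  then have SAB: "S \<subseteq> A \<union> B" using SZ by blast
  obtain FA where FA: "A = {a \<in> PV r. \<forall>(d, c) \<in> FA. hpoly r d c a = 0}" using AB unfolding zclosed_def by blast
  obtain FB where FB: "B = {a \<in> PV r. \<forall>(d, c) \<in> FB. hpoly r d c a = 0}" using AB unfolding zclosed_def by blast
  have "S \<subseteq> A \<or> S \<subseteq> B"
  proof (rule ccontr)
    assume "\<not> (S \<subseteq> A \<or> S \<subseteq> B)"
    then obtain u v where u: "u \<in> S" "u \<notin> A" and v: "v \<in> S" "v \<notin> B" by blast
    obtain d1 c1 where p1: "(d1, c1) \<in> FA" "hpoly r d1 c1 u \<noteq> 0"
      using u SPV FA by blast
    obtain d2 c2 where p2: "(d2, c2) \<in> FB" "hpoly r d2 c2 v \<noteq> 0"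
      using v SPV FB by blast
    obtain \<gamma> where g: "\<gamma> 0 = u" "\<gamma> 1 = v" "\<forall>s. \<gamma> s \<in> S" "\<forall>i. pf (\<lambda>s. \<gamma> s i)"
      using path[OF u(1) v(1)] by blast
    obtain P1 where P1: "\<forall>s. hpoly r d1 c1 (\<gamma> s) = poly P1 s"
      using pf_hpoly[of \<gamma> r d1 c1] g(4) unfolding pf_def by blast
    obtain P2 where P2: "\<forall>s. hpoly r d2 c2 (\<gamma> s) = poly P2 s"
      using pf_hpoly[of \<gamma> r d2 c2] g(4) unfolding pf_def by blast
    have "P1 \<noteq> 0" using P1 p1 g(1) by (metis poly_0)
    moreover have "P2 \<noteq> 0" using P2 p2 g(2) by (metis poly_0)
    moreover have "\<forall>s. poly (P1 * P2) s = 0"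
    proof
      fix s
      have "\<gamma> s \<in> A \<union> B" using g(3) SAB by blast
      then have "hpoly r d1 c1 (\<gamma> s) = 0 \<or> hpoly r d2 c2 (\<gamma> s) = 0"
        using p1(1) p2(1) unfolding FA FB by blast
      then show "poly (P1 * P2) s = 0" using P1 P2 by auto
    qed
    then have "P1 * P2 = 0" using poly_all_0_iff_0 by blast
    ultimately show False by simp
  qed
  then show "zclosure r S \<subseteq> A \<or> zclosure r S \<subseteq> B"
    using zclosure_least AB by blast
qed

lemma pf_img: "pf (\<lambda>s. img r p (x s) (\<mu> s) i)" if "pf x" "\<And>q. pf (\<lambda>s. \<mu> s q)"
  unfolding img_eq using that
  by (cases "i \<le> r") (auto intro!: pf_add pf_pow pf_sum pf_mult pf_const)

lemma osc_irred: "zirreducible r (osc r p)"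
  unfolding osc_def
proof (rule irred_closure)
  show "osc_image r p \<subseteq> PV r" unfolding osc_image_img using img_PV by blast
  show "osc_image r p \<noteq> {}" unfolding osc_image_img by blast
  fix u v assume "u \<in> osc_image r p" "v \<in> osc_image r p"
  then obtain t lam t' lam' where uv: "u = img r p t lam" "v = img r p t' lam'"
    unfolding osc_image_img by blast
  define \<gamma> where "\<gamma> s = img r p (t + s * (t' - t)) (\<lambda>q. lam q + s * (lam' q - lam q))" for s
  have "\<gamma> 0 = u" "\<gamma> 1 = v" unfolding \<gamma>_def uv by simp_all
  moreover have "\<forall>s. \<gamma> s \<in> osc_image r p" unfolding \<gamma>_def osc_image_img by blast
  moreover have "\<forall>i. pf (\<lambda>s. \<gamma> s i)"
    unfolding \<gamma>_def by (intro allI pf_img pf_add pf_mult pf_const pf_id)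
  ultimately show "\<exists>\<gamma>. \<gamma> 0 = u \<and> \<gamma> 1 = v \<and> (\<forall>s. \<gamma> s \<in> osc_image r p) \<and> (\<forall>i. pf (\<lambda>s. \<gamma> s i))"
    by blast
qed

lemma pt_irred: "zirreducible r (zclosure r {vcurve r 0})"
proof (rule irred_closure)
  show "{vcurve r 0} \<subseteq> PV r" unfolding PV_def vcurve_def by auto
  fix u v assume "u \<in> {vcurve r 0}" "v \<in> {vcurve r 0}"
  then show "\<exists>\<gamma>. \<gamma> 0 = u \<and> \<gamma> 1 = v \<and> (\<forall>s. \<gamma> s \<in> {vcurve r 0}) \<and> (\<forall>i. pf (\<lambda>s. \<gamma> s i))"
    by (intro exI[of _ "\<lambda>s. vcurve r 0"]) (auto simp: pf_const)
qed simp


lemma img_mono: "img r p t lam = img r (Suc p) t (lam(Suc p := 0))"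
  unfolding img_eq by (rule ext) (auto intro!: sum.cong)

lemma osc_image_mono: "osc_image r p \<subseteq> osc_image r (Suc p)"
  unfolding osc_image_img using img_mono by blast

lemma osc_mono: "osc r p \<subseteq> osc r (Suc p)"
  unfolding osc_def by (rule zclosure_mono[OF osc_image_mono])

lemma osc_strict: assumes "1 \<le> q" "2 * q \<le> r" shows "osc r (q - 1) \<subset> osc r q"
proof -
  obtain p where q: "q = Suc p" using assms by (cases q) auto
  have "osc r p \<subseteq> osc r (Suc p)" by (rule osc_mono)
  moreover have "osc r p \<noteq> osc r (Suc p)"
    using part1[OF assms] part2[OF assms] unfolding q by auto
  ultimately show ?thesis unfolding q by auto
qed

lemma pt_strict: assumes "1 \<le> r" shows "zclosure r {vcurve r 0} \<subset> osc r 0"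
proof
  have v0: "vcurve r 0 \<in> osc r 0"
  proof -
    have e: "vcurve r 0 = img r 0 0 (\<lambda>_. 0)" by (simp add: img_def)
    have "img r 0 0 (\<lambda>_. 0) \<in> osc_image r 0 \<inter> PV r" using img_PV unfolding osc_image_img by blast
    then have "vcurve r 0 \<in> osc_image r 0 \<inter> PV r" unfolding e .
    then show ?thesis unfolding osc_def using zclosure_sub by blast
  qed
  show "zclosure r {vcurve r 0} \<subseteq> osc r 0"
    by (rule zclosure_least) (use v0 zclosure_closed[of r "osc_image r 0"] in \<open>auto simp: osc_def\<close>)
  define mon1 :: "nat \<Rightarrow> nat" where "mon1 = (\<lambda>l. if l = 1 then 1 else 0)"
  define c1 :: "(nat \<Rightarrow> nat) \<Rightarrow> complex" where "c1 \<alpha> = (if \<alpha> = mon1 then 1 else 0)" for \<alpha>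
  have m1: "mon1 \<in> monoms r 1" unfolding monoms_def mon1_def using assms by auto
  have hp: "hpoly r 1 c1 a = a 1" for a
  proof -
    have "hpoly r 1 c1 a = (\<Sum>\<alpha>\<in>monoms r 1. if \<alpha> = mon1 then (\<Prod>l\<le>r. a l ^ \<alpha> l) else 0)"
      unfolding hpoly_def c1_def by (intro sum.cong refl) simp
    also have "\<dots> = (\<Prod>l\<le>r. a l ^ mon1 l)"
      using m1 by (simp add: sum.delta monoms_finite)
    also have "\<dots> = (\<Prod>l\<le>r. if l = 1 then a l else 1)"
      unfolding mon1_def by (intro prod.cong refl) auto
    also have "\<dots> = a 1" using assms by simp
    finally show ?thesis .
  qed
  define L where "L = {a \<in> PV r. \<forall>(d, c) \<in> {(1::nat, c1)}. hpoly r d c a = 0}"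
  have L: "L = {a \<in> PV r. a 1 = 0}" unfolding L_def using hp by auto
  have "zclosure r {vcurve r 0} \<subseteq> L"
  proof (rule zclosure_least)
    show "zclosed r L" unfolding zclosed_def L_def by blast
    show "{vcurve r 0} \<inter> PV r \<subseteq> L" unfolding L using assms by (auto simp: vcurve_def)
  qed
  moreover have "vcurve r 1 \<in> osc r 0"
  proof -
    have e: "vcurve r 1 = img r 0 1 (\<lambda>_. 0)" by (simp add: img_def)
    have "img r 0 1 (\<lambda>_. 0) \<in> osc_image r 0 \<inter> PV r" using img_PV unfolding osc_image_img by blast
    then have "vcurve r 1 \<in> osc_image r 0 \<inter> PV r" unfolding e .
    then show ?thesis unfolding osc_def using zclosure_sub by blast
  qed
  moreover have "vcurve r 1 \<notin> L" unfolding L using assms by (simp add: vcurve_def)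
  ultimately show "zclosure r {vcurve r 0} \<noteq> osc r 0" by blast
qed

theorem mainTheorem8:
  fixes r m :: nat
  assumes "r \<ge> 2" and "1 \<le> m" and "2 * m \<le> r"
  shows "osc r (m - 1) \<subseteq> Mvar r m \<and> \<not> osc r m \<subseteq> Mvar r m \<and> zdim r (Mvar r m) \<ge> enat m"
proof (intro conjI)
  show p1: "osc r (m - 1) \<subseteq> Mvar r m" by (rule part1[OF assms(2,3)])
  show "\<not> osc r m \<subseteq> Mvar r m" by (rule part2[OF assms(2,3)])
  define Z where "Z i = (if i = 0 then zclosure r {vcurve r 0} else osc r (i - 1))" for i
  have "(\<forall>i\<le>m. zirreducible r (Z i)) \<and> (\<forall>i<m. Z i \<subset> Z (Suc i)) \<and> Z m \<subseteq> Mvar r m"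
  proof (intro conjI allI impI)
    fix i assume "i \<le> m"
    show "zirreducible r (Z i)" unfolding Z_def by (simp add: pt_irred osc_irred)
  next
    fix i assume i: "i < m"
    show "Z i \<subset> Z (Suc i)"
    proof (cases i)
      case 0 then show ?thesis unfolding Z_def using pt_strict assms(1) by simp
    next
      case (Suc i')
      have "osc r (Suc i' - 1) \<subset> osc r (Suc i')"
        by (rule osc_strict) (use i Suc assms in auto)
      then show ?thesis unfolding Z_def Suc by simp
    qed
  next
    show "Z m \<subseteq> Mvar r m" unfolding Z_def using assms(2) p1 by simp
  qed
  then have "enat m \<in> {enat n | n. \<exists>Z. (\<forall>i\<le>n. zirreducible r (Z i)) \<and>
                                  (\<forall>i<n. Z i \<subset> Z (Suc i)) \<and> Z n \<subseteq> Mvar r m}" by blast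
  then show "zdim r (Mvar r m) \<ge> enat m" unfolding zdim_def by (rule Sup_upper)
qed

end
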